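(* Let $\kappa>0$ be a cardinal and let $T_\kappa$ be a tournament with at most $\mathsf{exp}_{10}(\kappa)$ vertices such that every $\kappa$-edge-colouring of $T_\kappa$ contains a quasi-monochromatic directed cycle of length three; put $\lambda_\kappa=|V(T_\kappa)|$. Let $T$ be a $\kappa$-edge-coloured tournament that has no king-serf duo by monochromatic paths of size at most $\lambda_\kappa$. Then $T$ has a subtournament isomorphic to $T_\kappa$ all of whose edges are forbidding edges of $T$.
   Context: A tournament is a directed graph obtained by orienting every edge of a (possibly infinite) complete undirected graph. For a cardinal $\kappa$, $\mathsf{exp}_0(\kappa)=\kappa$, $\mathsf{exp}_{k+1}(\kappa)=2^{\mathsf{exp}_k(\kappa)}$. A $\kappa$-edge-colouring of $T$ is a function $c:A(T)\to\kappa$. A monochromatic path is a directed path (no repeated vertices) whose edges all have the same colour. A directed cycle is quasi-monochromatic if all but at most one of its edges have the same colour. A king-serf duo by monochromatic paths in $T$ is a pair of disjoint sets $K,S\subseteq V(T)$ such that every vertex $v$ has a monochromatic path of length at most two from a vertex of $K$ to $v$ or from $v$ to a vertex of $S$; its size is $|K|+|S|$. An edge $uv$ of $T$ is forbidding if there is no monochromatic path of length at most two from $v$ to $u$ in $T$. *)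

theory Defs
  imports Main "HOL-Library.Equipollence"
begin

definition tournament :: "'v set \<Rightarrow> ('v \<Rightarrow> 'v \<Rightarrow> bool) \<Rightarrow> bool" where
  "tournament V E \<longleftrightarrow>
     (\<forall>u v. E u v \<longrightarrow> u \<in> V \<and> v \<in> V) \<and>
     (\<forall>u v. E u v \<longrightarrow> \<not> E v u) \<and>
     (\<forall>u\<in>V. \<forall>v\<in>V. u \<noteq> v \<longrightarrow> E u v \<or> E v u)"

definition edge_colouring :: "('v \<Rightarrow> 'v \<Rightarrow> bool) \<Rightarrow> 'c set \<Rightarrow> ('v \<Rightarrow> 'v \<Rightarrow> 'c) \<Rightarrow> bool" where
  "edge_colouring E C col \<longleftrightarrow> (\<forall>u v. E u v \<longrightarrow> col u v \<in> C)"

definition mono_path_le2 :: "('v \<Rightarrow> 'v \<Rightarrow> bool) \<Rightarrow> ('v \<Rightarrow> 'v \<Rightarrow> 'c) \<Rightarrow> 'v \<Rightarrow> 'v \<Rightarrow> bool" where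
  "mono_path_le2 E col x y \<longleftrightarrow>
     x = y \<or> E x y \<or>
     (\<exists>z. x \<noteq> y \<and> z \<noteq> x \<and> z \<noteq> y \<and> E x z \<and> E z y \<and> col x z = col z y)"

definition king_serf_duo ::
  "'v set \<Rightarrow> ('v \<Rightarrow> 'v \<Rightarrow> bool) \<Rightarrow> ('v \<Rightarrow> 'v \<Rightarrow> 'c) \<Rightarrow> 'v set \<Rightarrow> 'v set \<Rightarrow> bool" where
  "king_serf_duo V E col K S \<longleftrightarrow>
     K \<subseteq> V \<and> S \<subseteq> V \<and> K \<inter> S = {} \<and>
     (\<forall>v\<in>V. (\<exists>k\<in>K. mono_path_le2 E col k v) \<or> (\<exists>s\<in>S. mono_path_le2 E col v s))"

definition forbidding :: "('v \<Rightarrow> 'v \<Rightarrow> bool) \<Rightarrow> ('v \<Rightarrow> 'v \<Rightarrow> 'c) \<Rightarrow> 'v \<Rightarrow> 'v \<Rightarrow> bool" where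
  "forbidding E col u v \<longleftrightarrow> E u v \<and> \<not> mono_path_le2 E col v u"

definition has_qm_triangle :: "'w set \<Rightarrow> ('w \<Rightarrow> 'w \<Rightarrow> bool) \<Rightarrow> ('w \<Rightarrow> 'w \<Rightarrow> 'c) \<Rightarrow> bool" where
  "has_qm_triangle W E col \<longleftrightarrow>
     (\<exists>a\<in>W. \<exists>b\<in>W. \<exists>c\<in>W. a \<noteq> b \<and> b \<noteq> c \<and> a \<noteq> c \<and> E a b \<and> E b c \<and> E c a \<and>
        (col a b = col b c \<or> col b c = col c a \<or> col a b = col c a))"

text \<open>A set of cardinality exp_10(|C|): the power set operation iterated ten times (so exp_10).\<close>
definition pow10 :: "'c set \<Rightarrow> 'c set set set set set set set set set set set" where
  "pow10 C = Pow (Pow (Pow (Pow (Pow (Pow (Pow (Pow (Pow (Pow (C))))))))))"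

end

theory Submission
  imports Defs
begin

theorem lemma5:
  fixes C :: "'c set" and W :: "'w set" and Ew :: "'w \<Rightarrow> 'w \<Rightarrow> bool"
    and V :: "'v set" and E :: "'v \<Rightarrow> 'v \<Rightarrow> bool" and col :: "'v \<Rightarrow> 'v \<Rightarrow> 'c"
  assumes kappa_pos: "C \<noteq> {}"
    and Tk_tour: "tournament W Ew"
    and Tk_size: "W \<lesssim> pow10 C"
    and Tk_prop: "\<forall>d. edge_colouring Ew C d \<longrightarrow> has_qm_triangle W Ew d"
    and T_tour: "tournament V E"
    and T_col: "edge_colouring E C col"
    and no_duo: "\<not> (\<exists>K S. king_serf_duo V E col K S \<and> K \<union> S \<lesssim> W)"
  shows "\<exists>f. inj_on f W \<and> f ` W \<subseteq> V \<and>
           (\<forall>x\<in>W. \<forall>y\<in>W. Ew x y \<longleftrightarrow> E (f x) (f y)) \<and>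
           (\<forall>x\<in>W. \<forall>y\<in>W. Ew x y \<longrightarrow> forbidding E col (f x) (f y))"
proof -
  have Wt: "\<And>u v. Ew u v \<Longrightarrow> u \<in> W \<and> v \<in> W" "\<And>u v. Ew u v \<Longrightarrow> \<not> Ew v u"
    "\<And>u v. u \<in> W \<Longrightarrow> v \<in> W \<Longrightarrow> u \<noteq> v \<Longrightarrow> Ew u v \<or> Ew v u"
    using Tk_tour unfolding tournament_def by blast+
  have Vt: "\<And>u v. E u v \<Longrightarrow> u \<in> V \<and> v \<in> V" "\<And>u v. E u v \<Longrightarrow> \<not> E v u"
    "\<And>u v. u \<in> V \<Longrightarrow> v \<in> V \<Longrightarrow> u \<noteq> v \<Longrightarrow> E u v \<or> E v u"
    using T_tour unfolding tournament_def by blast+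
  define A where "A = {R. R \<subseteq> W \<times> V \<and> (\<forall>x a b. (x,a)\<in>R \<longrightarrow> (x,b)\<in>R \<longrightarrow> a=b) \<and>
     (\<forall>x a y b. (x,a)\<in>R \<longrightarrow> (y,b)\<in>R \<longrightarrow> Ew x y \<longrightarrow> forbidding E col a b)}"
  have "\<forall>Ch\<in>chains A. \<Union>Ch \<in> A"
  proof
    fix Ch assume Ch: "Ch \<in> chains A"
    hence sub: "Ch \<subseteq> A" and ch: "\<And>X Y. X \<in> Ch \<Longrightarrow> Y \<in> Ch \<Longrightarrow> X \<subseteq> Y \<or> Y \<subseteq> X"
      unfolding chains_def chain_subset_def by auto
    have two: "\<exists>R\<in>A. p \<in> R \<and> q \<in> R" if pq: "p \<in> \<Union>Ch" "q \<in> \<Union>Ch" for p q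
    proof -
      from pq(1) obtain X where a1: "X \<in> Ch" "p \<in> X" by blast
      from pq(2) obtain Y where a2: "Y \<in> Ch" "q \<in> Y" by blast
      have "X \<subseteq> Y \<or> Y \<subseteq> X" using ch[OF a1(1) a2(1)] .
      thus ?thesis using a1 a2 sub by blast
    qed
    show "\<Union>Ch \<in> A"
      unfolding A_def
    proof (intro CollectI conjI allI impI)
      show "\<Union>Ch \<subseteq> W \<times> V" using sub unfolding A_def by blast
    next
      fix x a b assume "(x,a) \<in> \<Union>Ch" "(x,b) \<in> \<Union>Ch"
      then obtain R where "R \<in> A" "(x,a)\<in>R" "(x,b)\<in>R" using two by blast
      thus "a = b" unfolding A_def by blast
    next
      fix x a y b assume "(x,a) \<in> \<Union>Ch" "(y,b) \<in> \<Union>Ch" "Ew x y"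
      then obtain R where "R \<in> A" "(x,a)\<in>R" "(y,b)\<in>R" using two by blast
      thus "forbidding E col a b" using \<open>Ew x y\<close> unfolding A_def by blast
    qed
  qed
  then obtain M where MA: "M \<in> A" and Mmax: "\<And>X. X \<in> A \<Longrightarrow> M \<subseteq> X \<Longrightarrow> X = M"
    using Zorn_Lemma[of A] by blast
  have Msub: "M \<subseteq> W \<times> V" and Mfun: "\<And>x a b. (x,a)\<in>M \<Longrightarrow> (x,b)\<in>M \<Longrightarrow> a=b"
    and Mforb: "\<And>x a y b. (x,a)\<in>M \<Longrightarrow> (y,b)\<in>M \<Longrightarrow> Ew x y \<Longrightarrow> forbidding E col a b"
    using MA unfolding A_def by blast+
  define g where "g x = (THE a. (x,a) \<in> M)" for x
  have gM: "g x = a" if "(x,a) \<in> M" for x a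
    unfolding g_def using that Mfun by blast
  have fullD: "\<forall>w\<in>W. \<exists>a. (w,a) \<in> M"
  proof (rule ccontr)
    assume "\<not> ?thesis"
    then obtain w where wW: "w \<in> W" and wn: "\<And>a. (w,a) \<notin> M" by blast
    define S where "S = {a. \<exists>x. (x,a)\<in>M \<and> Ew x w}"
    define K where "K = {a. \<exists>x. (x,a)\<in>M \<and> Ew w x}"
    have KV: "K \<subseteq> V" and SV: "S \<subseteq> V" using Msub unfolding K_def S_def by blast+
    have KS: "K \<inter> S = {}"
    proof (rule ccontr)
      assume "K \<inter> S \<noteq> {}"
      then obtain a x x' where 1: "(x,a)\<in>M" "Ew w x" "(x',a)\<in>M" "Ew x' w"
        unfolding K_def S_def by blast
      have "x \<noteq> x'" using 1 Wt(2) by blast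
      moreover have "x \<in> W" "x' \<in> W" using 1 Wt(1) by blast+
      ultimately have "Ew x x' \<or> Ew x' x" using Wt(3) by blast
      hence "E a a" using Mforb 1 unfolding forbidding_def by blast
      thus False using Vt(2) by blast
    qed
    have "K \<union> S \<subseteq> g ` W"
    proof
      fix a assume "a \<in> K \<union> S"
      then obtain x where "(x,a) \<in> M" unfolding K_def S_def by blast
      thus "a \<in> g ` W" using gM Msub by force
    qed
    hence "K \<union> S \<lesssim> W" using subset_imp_lepoll image_lepoll lepoll_trans by blast
    hence "\<not> king_serf_duo V E col K S" using no_duo by blast
    then obtain v where vV: "v \<in> V" and vK: "\<And>k. k \<in> K \<Longrightarrow> \<not> mono_path_le2 E col k v"
      and vS: "\<And>s. s \<in> S \<Longrightarrow> \<not> mono_path_le2 E col v s"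
      using KV SV KS unfolding king_serf_duo_def by blast
    have fK: "forbidding E col v k" if "k \<in> K" for k
    proof -
      have "k \<in> V" using that KV by blast
      moreover have "k \<noteq> v" using vK[OF that] unfolding mono_path_le2_def by blast
      moreover have "\<not> E k v" using vK[OF that] unfolding mono_path_le2_def by blast
      ultimately show ?thesis using Vt(3) vV vK[OF that] unfolding forbidding_def by blast
    qed
    have fS: "forbidding E col s v" if "s \<in> S" for s
    proof -
      have "s \<in> V" using that SV by blast
      moreover have "s \<noteq> v" using vS[OF that] unfolding mono_path_le2_def by blast
      moreover have "\<not> E v s" using vS[OF that] unfolding mono_path_le2_def by blast
      ultimately show ?thesis using Vt(3) vV vS[OF that] unfolding forbidding_def by blast
    qed
    define M' where "M' = insert (w,v) M"
    have "M' \<in> A"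
      unfolding A_def
    proof (intro CollectI conjI allI impI)
      show "M' \<subseteq> W \<times> V" using Msub wW vV unfolding M'_def by blast
    next
      fix x a b assume "(x,a) \<in> M'" "(x,b) \<in> M'"
      thus "a = b" using Mfun wn unfolding M'_def by blast
    next
      fix x a y b assume h: "(x,a) \<in> M'" "(y,b) \<in> M'" "Ew x y"
      show "forbidding E col a b"
      proof (cases "x = w")
        case True
        hence xa: "a = v" using h(1) wn unfolding M'_def by blast
        have "y \<noteq> w" using True h(3) Wt(2) by blast
        hence "(y,b) \<in> M" using h(2) unfolding M'_def by blast
        hence "b \<in> K" using True h(3) unfolding K_def by blast
        thus ?thesis using fK xa by blast
      next
        case False
        hence xa: "(x,a) \<in> M" using h(1) unfolding M'_def by blast
        show ?thesis
        proof (cases "y = w")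
          case True
          hence "b = v" using h(2) wn unfolding M'_def by blast
          moreover have "a \<in> S" using xa True h(3) unfolding S_def by blast
          ultimately show ?thesis using fS by blast
        next
          case False
          hence "(y,b) \<in> M" using h(2) unfolding M'_def by blast
          thus ?thesis using Mforb xa h(3) by blast
        qed
      qed
    qed
    moreover have "M \<subseteq> M'" unfolding M'_def by blast
    ultimately have "M' = M" using Mmax by blast
    thus False using wn unfolding M'_def by blast
  qed
  have gin: "(x, g x) \<in> M" if "x \<in> W" for x
    using fullD that gM by blast
  have forb: "\<forall>x\<in>W. \<forall>y\<in>W. Ew x y \<longrightarrow> forbidding E col (g x) (g y)"
    using gin Mforb by blast
  have img: "g ` W \<subseteq> V" using gin Msub by blast
  have Eg: "E (g x) (g y)" if "x \<in> W" "y \<in> W" "Ew x y" for x y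
    using forb that unfolding forbidding_def by blast
  have inj: "inj_on g W"
  proof (rule inj_onI)
    fix x y assume "x \<in> W" "y \<in> W" "g x = g y"
    show "x = y"
    proof (rule ccontr)
      assume "x \<noteq> y"
      hence "Ew x y \<or> Ew y x" using Wt(3) \<open>x \<in> W\<close> \<open>y \<in> W\<close> by blast
      hence "E (g x) (g x)" using Eg \<open>x \<in> W\<close> \<open>y \<in> W\<close> \<open>g x = g y\<close> by metis
      thus False using Vt(2) by blast
    qed
  qed
  have iff: "\<forall>x\<in>W. \<forall>y\<in>W. Ew x y \<longleftrightarrow> E (g x) (g y)"
  proof (intro ballI iffI)
    fix x y assume "x \<in> W" "y \<in> W" "Ew x y" thus "E (g x) (g y)" using Eg by blast
  next
    fix x y assume xy: "x \<in> W" "y \<in> W" "E (g x) (g y)"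
    have "x \<noteq> y" using xy(3) Vt(2) by blast
    hence "Ew x y \<or> Ew y x" using Wt(3) xy by blast
    moreover have "\<not> E (g y) (g x)" using xy(3) Vt(2) by blast
    ultimately show "Ew x y" using Eg xy by blast
  qed
  show ?thesis using inj img iff forb by blast
qed

end
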